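(* Let $G$ be a simple cubic graph on vertex set $[n]$ with girth at least $16$, let $A$ be a MAI set of $G$, and let $B=V(G)\setminus A$. Then $B$ is an AI set, i.e. every vertex of $B$ has at most one neighbour in $B$.
   Context: A vertex set $A$ of a graph $G$ is an AI set (almost independent set) if $\Delta(G[A])\le 1$, i.e. every component of the induced subgraph $G[A]$ is a single vertex or a single edge. A vertex set $A$ is a MAI set (maximum almost independent set) of $G$ if (M1) $A$ is an AI set, (M2) $A$ contains an independent set of size $\alpha(G)$, and (M3) $A$ has maximum cardinality among all vertex sets satisfying (M1) and (M2). *)

theory Defs
  imports Main
begin

definition simple_graph :: "'a set \<Rightarrow> ('a \<Rightarrow> 'a \<Rightarrow> bool) \<Rightarrow> bool" where
  "simple_graph V E \<longleftrightarrow> finite V \<and> (\<forall>u v. E u v \<longrightarrow> u \<in> V \<and> v \<in> V)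
     \<and> (\<forall>u v. E u v \<longrightarrow> E v u) \<and> (\<forall>v. \<not> E v v)"

definition nbrs :: "'a set \<Rightarrow> ('a \<Rightarrow> 'a \<Rightarrow> bool) \<Rightarrow> 'a \<Rightarrow> 'a set" where
  "nbrs V E v = {u \<in> V. E v u}"

definition cubic :: "'a set \<Rightarrow> ('a \<Rightarrow> 'a \<Rightarrow> bool) \<Rightarrow> bool" where
  "cubic V E \<longleftrightarrow> (\<forall>v\<in>V. card (nbrs V E v) = 3)"

definition is_cycle :: "'a set \<Rightarrow> ('a \<Rightarrow> 'a \<Rightarrow> bool) \<Rightarrow> 'a list \<Rightarrow> bool" where
  "is_cycle V E cs \<longleftrightarrow> length cs \<ge> 3 \<and> distinct cs \<and> set cs \<subseteq> V
     \<and> (\<forall>i. Suc i < length cs \<longrightarrow> E (cs ! i) (cs ! Suc i))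
     \<and> E (last cs) (hd cs)"

definition girth_at_least :: "'a set \<Rightarrow> ('a \<Rightarrow> 'a \<Rightarrow> bool) \<Rightarrow> nat \<Rightarrow> bool" where
  "girth_at_least V E g \<longleftrightarrow> (\<forall>cs. is_cycle V E cs \<longrightarrow> length cs \<ge> g)"

definition independent :: "'a set \<Rightarrow> ('a \<Rightarrow> 'a \<Rightarrow> bool) \<Rightarrow> 'a set \<Rightarrow> bool" where
  "independent V E I \<longleftrightarrow> I \<subseteq> V \<and> (\<forall>u\<in>I. \<forall>v\<in>I. \<not> E u v)"

definition alpha :: "'a set \<Rightarrow> ('a \<Rightarrow> 'a \<Rightarrow> bool) \<Rightarrow> nat" where
  "alpha V E = Max (card ` {I. independent V E I})"

definition AI_set :: "'a set \<Rightarrow> ('a \<Rightarrow> 'a \<Rightarrow> bool) \<Rightarrow> 'a set \<Rightarrow> bool" where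
  "AI_set V E A \<longleftrightarrow> A \<subseteq> V \<and> (\<forall>v\<in>A. card (nbrs V E v \<inter> A) \<le> 1)"

definition M12 :: "'a set \<Rightarrow> ('a \<Rightarrow> 'a \<Rightarrow> bool) \<Rightarrow> 'a set \<Rightarrow> bool" where
  "M12 V E A \<longleftrightarrow> AI_set V E A \<and>
     (\<exists>I \<subseteq> A. independent V E I \<and> card I = alpha V E)"

definition MAI_set :: "'a set \<Rightarrow> ('a \<Rightarrow> 'a \<Rightarrow> bool) \<Rightarrow> 'a set \<Rightarrow> bool" where
  "MAI_set V E A \<longleftrightarrow> M12 V E A \<and> (\<forall>A'. M12 V E A' \<longrightarrow> card A' \<le> card A)"

end

theory Submission
  imports Defs
begin

lemma indep_le_alpha:
  assumes "finite V" "independent V E J"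
  shows "card J \<le> alpha V E"
proof -
  have "card ` {I. independent V E I} \<subseteq> {0..card V}"
    using assms(1) by (auto simp: independent_def intro: card_mono)
  hence fin: "finite (card ` {I. independent V E I})" using finite_subset by blast
  show ?thesis unfolding alpha_def using assms(2) by (intro Max_ge[OF fin]) auto
qed

theorem lemma6:
  fixes n :: nat and E :: "nat \<Rightarrow> nat \<Rightarrow> bool" and A :: "nat set"
  assumes "simple_graph {1..n} E"
    and "cubic {1..n} E"
    and "girth_at_least {1..n} E 16"
    and "MAI_set {1..n} E A"
  shows "AI_set {1..n} E ({1..n} - A)"
proof (rule ccontr)
  define V where "V = {1..n::nat}"
  have finV: "finite V" unfolding V_def by simp
  have sg: "\<And>u v. E u v \<Longrightarrow> u \<in> V \<and> v \<in> V" "\<And>u v. E u v \<Longrightarrow> E v u" "\<And>v. \<not> E v v"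
    using assms(1) unfolding simple_graph_def V_def by auto
  have AI: "AI_set V E A" and maxA: "\<And>A'. M12 V E A' \<Longrightarrow> card A' \<le> card A"
    using assms(4) unfolding MAI_set_def M12_def V_def by auto
  obtain I where IA: "I \<subseteq> A" and Iind: "independent V E I" and Icard: "card I = alpha V E"
    using assms(4) unfolding MAI_set_def M12_def V_def by auto
  have AV: "A \<subseteq> V" using AI unfolding AI_set_def by auto
  have finA: "finite A" using AV finV finite_subset by blast
  have finI: "finite I" using IA finA finite_subset by blast
  have Adeg: "\<And>z. z \<in> A \<Longrightarrow> card (nbrs V E z \<inter> A) \<le> 1" using AI unfolding AI_set_def by auto
  assume "\<not> AI_set {1..n} E ({1..n} - A)"
  then obtain v where vV: "v \<in> V" and vA: "v \<notin> A" and vB: "card (nbrs V E v \<inter> (V - A)) > 1"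
    unfolding AI_set_def V_def by force
  let ?N = "nbrs V E v"
  have finN: "finite ?N" using finV unfolding nbrs_def by simp
  have N3: "card ?N = 3" using assms(2) vV unfolding cubic_def V_def by auto
  have split: "card ?N = card (?N \<inter> A) + card (?N \<inter> (V - A))"
  proof -
    have "?N = (?N \<inter> A) \<union> (?N \<inter> (V - A))" unfolding nbrs_def by blast
    hence "card ?N = card ((?N \<inter> A) \<union> (?N \<inter> (V - A)))" by simp
    also have "\<dots> = card (?N \<inter> A) + card (?N \<inter> (V - A))"
      by (rule card_Un_disjoint) (use finN in auto)
    finally show ?thesis .
  qed
  have NA: "card (?N \<inter> A) \<le> 1" using split N3 vB by linarith
  have NAeq: "\<And>a b. a \<in> A \<Longrightarrow> b \<in> A \<Longrightarrow> E v a \<Longrightarrow> E v b \<Longrightarrow> a = b"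
  proof -
    fix a b assume "a \<in> A" "b \<in> A" "E v a" "E v b"
    hence "a \<in> ?N \<inter> A" "b \<in> ?N \<inter> A" using sg(1)[of v a] sg(1)[of v b] unfolding nbrs_def by auto
    moreover have "finite (?N \<inter> A)" using finN by simp
    ultimately show "a = b" using NA by (simp add: card_le_Suc0_iff_eq)
  qed
  have "\<not> AI_set V E (insert v A)"
  proof
    assume "AI_set V E (insert v A)"
    hence "M12 V E (insert v A)" unfolding M12_def using IA Iind Icard by blast
    hence "card (insert v A) \<le> card A" by (rule maxA)
    thus False using vA finA by simp
  qed
  then obtain z where zin: "z \<in> insert v A" and zdeg: "card (nbrs V E z \<inter> insert v A) > 1"
    unfolding AI_set_def using AV vV by force
  have zA: "z \<in> A"
  proof (rule ccontr)
    assume "z \<notin> A" hence "z = v" using zin by auto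
    hence "nbrs V E z \<inter> insert v A = ?N \<inter> A" using sg(3) unfolding nbrs_def by auto
    thus False using zdeg NA \<open>z = v\<close> by simp
  qed
  have zv: "E z v"
  proof (rule ccontr)
    assume "\<not> E z v"
    hence "nbrs V E z \<inter> insert v A = nbrs V E z \<inter> A" unfolding nbrs_def by auto
    thus False using zdeg Adeg[OF zA] by simp
  qed
  define x where "x = z"
  have xA: "x \<in> A" using zA x_def by simp
  have vx: "E v x" using zv sg(2) x_def by metis
  have "nbrs V E x \<inter> A \<noteq> {}"
  proof
    assume e: "nbrs V E x \<inter> A = {}"
    have "nbrs V E x \<inter> insert v A \<subseteq> {v}" using e by auto
    hence "card (nbrs V E x \<inter> insert v A) \<le> 1"
      using card_mono[of "{v}"] by fastforce
    thus False using zdeg x_def by simp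
  qed
  then obtain y where yA: "y \<in> A" and xy: "E x y" unfolding nbrs_def by auto
  have xI: "x \<in> I"
  proof (rule ccontr)
    assume xI: "x \<notin> I"
    have vI0: "\<And>b. b \<in> I \<Longrightarrow> \<not> E v b"
    proof
      fix b assume "b \<in> I" "E v b"
      hence "b = x" using NAeq[OF xA _ vx] IA by blast
      thus False using xI \<open>b \<in> I\<close> by simp
    qed
    have II: "\<And>a b. a \<in> I \<Longrightarrow> b \<in> I \<Longrightarrow> \<not> E a b" "I \<subseteq> V" using Iind unfolding independent_def by auto
    have "independent V E (insert v I)"
      unfolding independent_def
    proof (intro conjI ballI)
      show "insert v I \<subseteq> V" using II(2) vV by simp
    next
      fix a b assume "a \<in> insert v I" "b \<in> insert v I"
      then consider "a = v" "b = v" | "a = v" "b \<in> I" | "a \<in> I" "b = v" | "a \<in> I" "b \<in> I" by auto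
      thus "\<not> E a b"
      proof cases
        case 1 thus ?thesis using sg(3) by simp
      next
        case 2 thus ?thesis using vI0 by simp
      next
        case 3 thus ?thesis using vI0 sg(2) by metis
      next
        case 4 thus ?thesis using II by simp
      qed
    qed
    hence "card (insert v I) \<le> alpha V E" by (rule indep_le_alpha[OF finV])
    moreover have "v \<notin> I" using IA vA by auto
    ultimately show False using finI Icard by simp
  qed
  have yI: "y \<notin> I" using Iind xI xy unfolding independent_def by auto
  have yx: "\<And>b. b \<in> A \<Longrightarrow> E y b \<Longrightarrow> b = x"
  proof -
    fix b assume "b \<in> A" "E y b"
    have "E y x" using sg(2) xy by metis
    hence "b \<in> nbrs V E y \<inter> A" "x \<in> nbrs V E y \<inter> A" using sg(1) \<open>b \<in> A\<close> \<open>E y b\<close> xA unfolding nbrs_def by auto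
    moreover have "finite (nbrs V E y \<inter> A)" using finA by simp
    ultimately show "b = x" using Adeg[OF yA] by (simp add: card_le_Suc0_iff_eq)
  qed
  have yv: "\<not> E v y"
  proof
    assume "E v y"
    hence "x = y" using NAeq[OF xA yA vx] by simp
    thus False using xy sg(3) by simp
  qed
  define J where "J = insert v (insert y (I - {x}))"
  have yV: "y \<in> V" using sg(1)[OF xy] by simp
  have "independent V E J"
    unfolding independent_def J_def
  proof (intro conjI ballI)
    show "insert v (insert y (I - {x})) \<subseteq> V" using vV yV Iind unfolding independent_def by auto
  next
    fix a b assume a: "a \<in> insert v (insert y (I - {x}))" and b: "b \<in> insert v (insert y (I - {x}))"
    have II: "\<And>a b. a \<in> I \<Longrightarrow> b \<in> I \<Longrightarrow> \<not> E a b" using Iind unfolding independent_def by auto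
    have vI: "\<And>b. b \<in> I - {x} \<Longrightarrow> \<not> E v b"
    proof
      fix b assume "b \<in> I - {x}" "E v b"
      hence "b \<in> A" using IA by auto
      from NAeq[OF xA this vx \<open>E v b\<close>] \<open>b \<in> I - {x}\<close> show False by simp
    qed
    have yI': "\<And>b. b \<in> I - {x} \<Longrightarrow> \<not> E y b"
    proof
      fix b assume "b \<in> I - {x}" "E y b"
      hence "b \<in> A" using IA by auto
      from yx[OF this \<open>E y b\<close>] \<open>b \<in> I - {x}\<close> show False by simp
    qed
    from a b consider "a = v" "b = v" | "a = v" "b = y" | "a = v" "b \<in> I - {x}"
      | "a = y" "b = v" | "a = y" "b = y" | "a = y" "b \<in> I - {x}"
      | "a \<in> I - {x}" "b = v" | "a \<in> I - {x}" "b = y" | "a \<in> I - {x}" "b \<in> I - {x}" by auto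
    thus "\<not> E a b"
    proof cases
      case 1 thus ?thesis using sg(3) by simp
    next case 2 thus ?thesis using yv by simp
    next case 3 thus ?thesis using vI by simp
    next case 4 thus ?thesis using yv sg(2) by metis
    next case 5 thus ?thesis using sg(3) by simp
    next case 6 thus ?thesis using yI' by simp
    next case 7 thus ?thesis using vI sg(2) by metis
    next case 8 thus ?thesis using yI' sg(2) by metis
    next case 9 thus ?thesis using II by simp
    qed
  qed
  hence "card J \<le> alpha V E" by (rule indep_le_alpha[OF finV])
  moreover have "card J = card I + 1"
  proof -
    have "v \<notin> I" using IA vA by auto
    moreover have "v \<noteq> y" using vA yA by auto
    ultimately have "card J = card (I - {x}) + 2" unfolding J_def using finI yI by simp
    moreover have "card I > 0" using xI finI card_gt_0_iff by blast
    ultimately show ?thesis using card_Diff_singleton[OF xI] by simp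
  qed
  ultimately show False using Icard by simp
qed

end
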